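(* Let $K\subseteq\mathbb{R}^n$ be a closed convex cone that is facially exposed, and let $F$ be a face of $K$ with $F=\operatorname{cone}\{p_1,p_2\}=\{\alpha p_1+\beta p_2:\alpha,\beta\ge0\}$ for some linearly independent $p_1,p_2\in\mathbb{R}^n$. Then $K^*+F^\perp$ is closed.
   Context: $\mathbb{R}^n$ is identified with its dual. A face of $K$ is a closed convex $F\subseteq K$ such that $x\in F$, $y,z\in K$, $x\in(y,z)$ imply $y,z\in F$; it is exposed if $F=K\cap H$ for some supporting hyperplane $H$; $K$ is facially exposed if every nonempty face $F\ne K$ is exposed. $K^*=\{s:\langle s,x\rangle\ge0\ \forall x\in K\}$, $F^\perp=\{s:\langle s,x\rangle=0\ \forall x\in F\}$. *)

theory Defs
  imports "HOL-Analysis.Analysis"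
begin

definition facially_exposed :: "'a::euclidean_space set \<Rightarrow> bool" where
  "facially_exposed K \<longleftrightarrow>
     (\<forall>F. F face_of K \<and> F \<noteq> {} \<and> F \<noteq> K \<longrightarrow> F exposed_face_of K)"

definition dual_cone :: "'a::euclidean_space set \<Rightarrow> 'a set" where
  "dual_cone K = {s. \<forall>x\<in>K. 0 \<le> s \<bullet> x}"

definition perp_set :: "'a::euclidean_space set \<Rightarrow> 'a set" where
  "perp_set F = {s. \<forall>x\<in>F. s \<bullet> x = 0}"

end

theory Submission
  imports Defs
begin

lemma ray_face:
  fixes p q :: "'a::euclidean_space"
  assumes ind: "\<And>x y. x *\<^sub>R p + y *\<^sub>R q = 0 \<Longrightarrow> x = 0 \<and> y = 0"
    and F: "F = {\<alpha> *\<^sub>R p + \<beta> *\<^sub>R q | \<alpha> \<beta>. \<alpha> \<ge> 0 \<and> \<beta> \<ge> 0}"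
  shows "{c *\<^sub>R q | c. c \<ge> 0} face_of F"
  unfolding face_of_def
proof (intro conjI ballI impI)
  show "{c *\<^sub>R q | c. c \<ge> 0} \<subseteq> F" unfolding F by force
  show "convex {c *\<^sub>R q | c. c \<ge> (0::real)}"
    unfolding convex_def
  proof (intro ballI allI impI)
    fix x y and u v :: real
    assume "x \<in> {c *\<^sub>R q | c. c \<ge> 0}" "y \<in> {c *\<^sub>R q | c. c \<ge> 0}" "0 \<le> u" "0 \<le> v" "u + v = 1"
    then obtain c d where "x = c *\<^sub>R q" "y = d *\<^sub>R q" "c \<ge> 0" "d \<ge> 0" by auto
    then have "u *\<^sub>R x + v *\<^sub>R y = (u * c + v * d) *\<^sub>R q" "u * c + v * d \<ge> 0"
      using \<open>0 \<le> u\<close> \<open>0 \<le> v\<close> by (auto simp: algebra_simps)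
    then show "u *\<^sub>R x + v *\<^sub>R y \<in> {c *\<^sub>R q | c. c \<ge> 0}" by blast
  qed
  fix a b x
  assume a: "a \<in> F" and b: "b \<in> F" and x: "x \<in> {c *\<^sub>R q | c. c \<ge> 0}" and s: "x \<in> open_segment a b"
  obtain a1 a2 where A: "a = a1 *\<^sub>R p + a2 *\<^sub>R q" "a1 \<ge> 0" "a2 \<ge> 0" using a F by auto
  obtain b1 b2 where B: "b = b1 *\<^sub>R p + b2 *\<^sub>R q" "b1 \<ge> 0" "b2 \<ge> 0" using b F by auto
  obtain c where C: "x = c *\<^sub>R q" using x by auto
  obtain u where U: "0 < u" "u < 1" "x = (1 - u) *\<^sub>R a + u *\<^sub>R b" using s by (auto simp: in_segment)
  have "((1-u)*a1 + u*b1) *\<^sub>R p + ((1-u)*a2 + u*b2 - c) *\<^sub>R q = 0"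
    using U(3) A(1) B(1) C by (simp add: algebra_simps)
  then have "(1-u)*a1 + u*b1 = 0" using ind by blast
  moreover have "(1-u)*a1 \<ge> 0" "u*b1 \<ge> 0" using U A B by auto
  ultimately have "(1-u)*a1 = 0" "u*b1 = 0" by linarith+
  then have "a1 = 0" "b1 = 0" using U by auto
  then show "a \<in> {c *\<^sub>R q | c. c \<ge> 0}" "b \<in> {c *\<^sub>R q | c. c \<ge> 0}" using A B by auto
qed

lemma key:
  fixes K F :: "'a::euclidean_space set" and p q :: 'a
  assumes cc: "convex_cone K" and fe: "facially_exposed K" and fK: "F face_of K"
    and F: "F = {\<alpha> *\<^sub>R p + \<beta> *\<^sub>R q | \<alpha> \<beta>. \<alpha> \<ge> 0 \<and> \<beta> \<ge> 0}"
    and ind: "\<And>x y. x *\<^sub>R p + y *\<^sub>R q = 0 \<Longrightarrow> x = 0 \<and> y = 0"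
  shows "\<exists>s \<in> dual_cone K. s \<bullet> q = 0 \<and> s \<bullet> p > 0"
proof -
  define R where "R = {c *\<^sub>R q | c. c \<ge> (0::real)}"
  have RF: "R face_of F" unfolding R_def by (rule ray_face[OF ind F])
  have RK: "R face_of K" using face_of_trans[OF RF fK] .
  have pF: "p \<in> F" unfolding F by (rule CollectI, rule exI[of _ 1], rule exI[of _ 0]) simp
  have qR: "q \<in> R" unfolding R_def by (rule CollectI, rule exI[of _ 1]) simp
  have 0: "0 \<in> R" unfolding R_def by (rule CollectI, rule exI[of _ 0]) simp
  have pK: "p \<in> K" using pF fK face_of_imp_subset by blast
  have pR: "p \<notin> R"
  proof
    assume "p \<in> R"
    then obtain c where "p = c *\<^sub>R q" unfolding R_def by auto
    then have "1 *\<^sub>R p + (-c) *\<^sub>R q = 0" by simp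
    then show False using ind by fastforce
  qed
  have "R \<noteq> {}" "R \<noteq> K" using 0 pR pK by auto
  then have "R exposed_face_of K" using fe RK unfolding facially_exposed_def by blast
  then obtain a b where ab: "K \<subseteq> {x. a \<bullet> x \<le> b}" "R = K \<inter> {x. a \<bullet> x = b}"
    unfolding exposed_face_of_def by blast
  have b0: "b = 0" using 0 ab(2) by auto
  have "- a \<in> dual_cone K" using ab(1) b0 unfolding dual_cone_def by auto
  moreover have "(- a) \<bullet> q = 0" using qR ab(2) b0 by auto
  moreover have "(- a) \<bullet> p > 0"
  proof -
    have "a \<bullet> p \<le> 0" using ab(1) b0 pK by auto
    moreover have "a \<bullet> p \<noteq> 0" using pR pK ab(2) b0 by auto
    ultimately show ?thesis by simp
  qed
  ultimately show ?thesis by blast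
qed

theorem propositionA3:
  fixes K F :: "'a::euclidean_space set" and p1 p2 :: 'a
  assumes "closed K" and "convex_cone K"
    and "facially_exposed K"
    and "F face_of K"
    and "F = {\<alpha> *\<^sub>R p1 + \<beta> *\<^sub>R p2 | \<alpha> \<beta>. \<alpha> \<ge> 0 \<and> \<beta> \<ge> 0}"
    and "independent {p1, p2}" and "p1 \<noteq> p2"
  shows "closed {s + t | s t. s \<in> dual_cone K \<and> t \<in> perp_set F}"
proof -
  have nsp: "p1 \<notin> span {p2}" and p20: "p2 \<noteq> 0"
    using assms(6,7) by (auto simp: independent_insert dependent_single)
  have ind: "x = 0 \<and> y = 0" if "x *\<^sub>R p1 + y *\<^sub>R p2 = 0" for x y
  proof -
    have x0: "x = 0"
    proof (rule ccontr)
      assume "x \<noteq> 0"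
      have "x *\<^sub>R p1 = - (y *\<^sub>R p2)" using that by (simp add: eq_neg_iff_add_eq_0)
      then have "inverse x *\<^sub>R (x *\<^sub>R p1) = inverse x *\<^sub>R (- (y *\<^sub>R p2))" by simp
      then have "p1 = (- (y / x)) *\<^sub>R p2" using \<open>x \<noteq> 0\<close> by (simp add: divide_inverse mult.commute)
      then have "p1 \<in> span {p2}" by (simp add: span_base span_scale span_neg)
      then show False using nsp by simp
    qed
    then have "y = 0" using that p20 by simp
    then show ?thesis using x0 by simp
  qed
  have ind2: "x = 0 \<and> y = 0" if "x *\<^sub>R p2 + y *\<^sub>R p1 = 0" for x y
    using ind[of y x] that by (simp add: add.commute)
  have F2: "F = {\<alpha> *\<^sub>R p2 + \<beta> *\<^sub>R p1 | \<alpha> \<beta>. \<alpha> \<ge> 0 \<and> \<beta> \<ge> 0}"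
    using assms(5) by (auto simp: add.commute) (metis add.commute)+
  obtain s1 where s1: "s1 \<in> dual_cone K" "s1 \<bullet> p2 = 0" "s1 \<bullet> p1 > 0"
    using key[OF assms(2,3,4,5) ind] by blast
  obtain s2 where s2: "s2 \<in> dual_cone K" "s2 \<bullet> p1 = 0" "s2 \<bullet> p2 > 0"
    using key[OF assms(2,3,4) F2 ind2] by blast
  have p1F: "p1 \<in> F" unfolding assms(5) by (rule CollectI, rule exI[of _ 1], rule exI[of _ 0]) simp
  have p2F: "p2 \<in> F" unfolding assms(5) by (rule CollectI, rule exI[of _ 0], rule exI[of _ 1]) simp
  have FK: "F \<subseteq> K" using assms(4) face_of_imp_subset by blast
  have eq: "{s + t | s t. s \<in> dual_cone K \<and> t \<in> perp_set F} = {y. y \<bullet> p1 \<ge> 0} \<inter> {y. y \<bullet> p2 \<ge> 0}"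
  proof (intro equalityI subsetI)
    fix y assume "y \<in> {s + t | s t. s \<in> dual_cone K \<and> t \<in> perp_set F}"
    then obtain s t where "y = s + t" "s \<in> dual_cone K" "t \<in> perp_set F" by blast
    then show "y \<in> {y. y \<bullet> p1 \<ge> 0} \<inter> {y. y \<bullet> p2 \<ge> 0}"
      using p1F p2F FK unfolding dual_cone_def perp_set_def by (auto simp: inner_add_left)
  next
    fix y assume y: "y \<in> {y. y \<bullet> p1 \<ge> 0} \<inter> {y. y \<bullet> p2 \<ge> 0}"
    define a where "a = (y \<bullet> p1) / (s1 \<bullet> p1)"
    define b where "b = (y \<bullet> p2) / (s2 \<bullet> p2)"
    define s where "s = a *\<^sub>R s1 + b *\<^sub>R s2"
    have a0: "a \<ge> 0" "b \<ge> 0" using y s1 s2 unfolding a_def b_def by auto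
    have "s \<in> dual_cone K"
      using s1(1) s2(1) a0 unfolding s_def dual_cone_def
      by (auto simp: inner_add_left intro!: add_nonneg_nonneg mult_nonneg_nonneg)
    moreover have "s \<bullet> p1 = y \<bullet> p1" "s \<bullet> p2 = y \<bullet> p2"
      using s1 s2 unfolding s_def a_def b_def by (auto simp: inner_add_left)
    moreover have "y - s \<in> perp_set F"
    proof -
      { fix x assume "x \<in> F"
        then obtain \<alpha> \<beta> where "x = \<alpha> *\<^sub>R p1 + \<beta> *\<^sub>R p2" using assms(5) by auto
        then have "(y - s) \<bullet> x = 0"
          using \<open>s \<bullet> p1 = y \<bullet> p1\<close> \<open>s \<bullet> p2 = y \<bullet> p2\<close>
          by (simp add: inner_add_right inner_diff_left) }
      then show ?thesis unfolding perp_set_def by blast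
    qed
    ultimately show "y \<in> {s + t | s t. s \<in> dual_cone K \<and> t \<in> perp_set F}"
      by (intro CollectI exI[of _ s] exI[of _ "y - s"]) simp
  qed
  have c1: "closed {y. y \<bullet> p1 \<ge> (0::real)}" using closed_halfspace_component_ge
    closed_halfspace_ge[of 0 p1] by (simp add: inner_commute)
  have c2: "closed {y. y \<bullet> p2 \<ge> (0::real)}" using
    closed_halfspace_ge[of 0 p2] by (simp add: inner_commute)
  show ?thesis unfolding eq using c1 c2 by (rule closed_Int)
qed

end
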